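(* Let $P:\{-1,1\}^k\to\{0,1\}$ be a predicate such that there is no uniformly positively correlated probability distribution supported on $P^{-1}(1)$. Then there is a real polynomial $Q$ of degree at most $2$ in $x_1,\dots,x_k$ such that $Q(x)>E_Q^+$ for every $x\in P^{-1}(1)$. Furthermore, $Q$ can be chosen such that the maximum defining $E_Q^+$ is attained at a bias $r$ with $|r|<1$.
   Context: Boolean values are encoded as $\pm1$. For $Q:\{-1,1\}^k\to\mathbb{R}$ and $r\in[-1,1]$, $E_Q(r)=\mathbb{E}[Q(x)]$ where $x$ has independent coordinates each with expectation $r$ (i.e., $x_i=1$ with probability $(1+r)/2$), and $E_Q^+=\max_{r\in[-1,1]}E_Q(r)$. A distribution on $\{-1,1\}^k$ is uniformly positively correlated if there are $p,\rho\in[0,1]$ with $\rho\ge p^2$ such that $\Pr[x_i=1]=p$ for every $i$ and $\Pr[x_i=1\wedge x_j=1]=\rho$ for every $i<j$. *)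

theory Defs
  imports "HOL-Probability.Probability"
begin

text \<open>Points of the Boolean cube {-1,1}^k: coordinates indexed by 0..k-1,
  extended by 0 outside (so that the cube is a finite set of functions).\<close>
definition cube :: "nat \<Rightarrow> (nat \<Rightarrow> real) set" where
  "cube k = {x. (\<forall>i<k. x i = 1 \<or> x i = -1) \<and> (\<forall>i. k \<le> i \<longrightarrow> x i = 0)}"

definition unif_pos_corr :: "nat \<Rightarrow> (nat \<Rightarrow> real) pmf \<Rightarrow> bool" where
  "unif_pos_corr k \<mu> \<longleftrightarrow> set_pmf \<mu> \<subseteq> cube k \<and>
     (\<exists>p \<rho>. p \<in> {0..1} \<and> \<rho> \<in> {0..1} \<and> \<rho> \<ge> p^2 \<and>
        (\<forall>i<k. measure_pmf.prob \<mu> {x. x i = 1} = p) \<and>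
        (\<forall>i j. i < j \<and> j < k \<longrightarrow> measure_pmf.prob \<mu> {x. x i = 1 \<and> x j = 1} = \<rho>))"

definition quadpoly :: "nat \<Rightarrow> real \<Rightarrow> (nat \<Rightarrow> real) \<Rightarrow> (nat \<Rightarrow> nat \<Rightarrow> real) \<Rightarrow> (nat \<Rightarrow> real) \<Rightarrow> real" where
  "quadpoly k c a b x = c + (\<Sum>i<k. a i * x i) + (\<Sum>i<k. \<Sum>j<k. b i j * x i * x j)"

text \<open>E_Q(r): expectation of Q under independent coordinates of mean r,
  i.e. Pr[x_i = 1] = (1+r)/2.\<close>
definition EQ :: "nat \<Rightarrow> ((nat \<Rightarrow> real) \<Rightarrow> real) \<Rightarrow> real \<Rightarrow> real" where
  "EQ k Q r = (\<Sum>x\<in>cube k. (\<Prod>i<k. (1 + r * x i) / 2) * Q x)"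

definition EQplus :: "nat \<Rightarrow> ((nat \<Rightarrow> real) \<Rightarrow> real) \<Rightarrow> real" where
  "EQplus k Q = (SUP r\<in>{-1..1}. EQ k Q r)"

end

theory Submission
  imports Defs
begin


lemma cube_0: "cube 0 = {\<lambda>_. 0}"
  by (auto simp: cube_def)

lemma cube_Suc: "cube (Suc k) = (\<lambda>(x,t). x(k:=t)) ` (cube k \<times> {1,-1})"
proof (intro equalityI subsetI)
  fix y assume y: "y \<in> cube (Suc k)"
  have "y(k:=0) \<in> cube k" using y by (auto simp: cube_def)
  moreover have "y k \<in> {1,-1}" using y by (auto simp: cube_def)
  ultimately show "y \<in> (\<lambda>(x,t). x(k:=t)) ` (cube k \<times> {1,-1})"
    by (intro image_eqI[of _ _ "(y(k:=0), y k)"]) auto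
next
  fix y assume "y \<in> (\<lambda>(x,t). x(k:=t)) ` (cube k \<times> {1,-1})"
  then obtain x t where "x \<in> cube k" "t \<in> {1,-1}" "y = x(k:=t)" by auto
  then show "y \<in> cube (Suc k)" by (auto simp: cube_def less_Suc_eq)
qed

lemma finite_cube: "finite (cube k)"
  by (induction k) (auto simp: cube_0 cube_Suc)

lemma cube_val: "x \<in> cube k \<Longrightarrow> i < k \<Longrightarrow> x i = 1 \<or> x i = -1"
  by (auto simp: cube_def)

lemma sum_cube_Suc:
  "(\<Sum>x\<in>cube (Suc k). g x) = (\<Sum>x\<in>cube k. g (x(k:=1)) + g (x(k:=-1)))"
proof -
  have inj: "inj_on (\<lambda>(x,t). x(k:=t)) (cube k \<times> {1,-1::real})"
  proof (rule inj_onI, clarify)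
    fix x t x' t' assume a: "x \<in> cube k" "t \<in> {1,-1::real}" "x' \<in> cube k" "t' \<in> {1,-1::real}"
      and e: "x(k:=t) = x'(k:=t')"
    have "t = t'" using fun_cong[OF e, of k] by simp
    moreover have "x = x'"
    proof
      fix i show "x i = x' i"
        using fun_cong[OF e, of i] a by (cases "i = k") (auto simp: cube_def)
    qed
    ultimately show "x = x' \<and> t = t'" by simp
  qed
  have "(\<Sum>x\<in>cube (Suc k). g x) = (\<Sum>p\<in>cube k \<times> {1,-1}. g ((\<lambda>(x,t). x(k:=t)) p))"
    unfolding cube_Suc by (rule sum.reindex[OF inj, unfolded comp_def])
  also have "\<dots> = (\<Sum>x\<in>cube k. \<Sum>t\<in>{1,-1::real}. g (x(k:=t)))"
    by (subst sum.cartesian_product) (simp add: case_prod_beta)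
  also have "\<dots> = (\<Sum>x\<in>cube k. g (x(k:=1)) + g (x(k:=-1)))" by simp
  finally show ?thesis .
qed

lemma sum_cube_prod:
  fixes f :: "nat \<Rightarrow> real \<Rightarrow> real"
  shows "(\<Sum>x\<in>cube k. \<Prod>i<k. f i (x i)) = (\<Prod>i<k. f i 1 + f i (-1))"
proof (induction k)
  case 0 then show ?case by (simp add: cube_0)
next
  case (Suc k)
  have h: "(\<Prod>i<Suc k. f i ((x(k:=t)) i)) = (\<Prod>i<k. f i (x i)) * f k t" for x t
    by (simp add: prod.lessThan_Suc)
  have "(\<Sum>x\<in>cube (Suc k). \<Prod>i<Suc k. f i (x i)) = (\<Sum>x\<in>cube k. \<Prod>i<k. f i (x i)) * f k 1 + (\<Sum>x\<in>cube k. \<Prod>i<k. f i (x i)) * f k (-1)"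
    unfolding sum_distrib_right by (simp add: sum_cube_Suc h sum.distrib)
  then show ?case
    by (simp add: Suc.IH prod.lessThan_Suc distrib_left)
qed

definition pr :: "nat \<Rightarrow> real \<Rightarrow> (nat \<Rightarrow> real) \<Rightarrow> real" where
  "pr k r x = (\<Prod>i<k. (1 + r * x i) / 2)"

lemma mom0: "(\<Sum>x\<in>cube k. pr k r x) = 1"
proof -
  have e: "(1 + r) / 2 + (1 - r) / 2 = (1::real)" by (simp add: field_simps)
  show ?thesis unfolding pr_def by (subst sum_cube_prod) (simp add: e)
qed

lemma mom1:
  assumes "a < k" shows "(\<Sum>x\<in>cube k. pr k r x * x a) = r"
proof -
  define g where "g = (\<lambda>i t. (1 + r * t) / 2 * (if i = a then t else (1::real)))"
  have "pr k r x * x a = (\<Prod>i<k. g i (x i))" for x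
    unfolding g_def pr_def prod.distrib using assms by (simp add: prod.delta')
  then have "(\<Sum>x\<in>cube k. pr k r x * x a) = (\<Sum>x\<in>cube k. \<Prod>i<k. g i (x i))" by simp
  also have "\<dots> = (\<Prod>i<k. g i 1 + g i (-1))" by (rule sum_cube_prod)
  also have "\<dots> = (\<Prod>i<k. (if i = a then r else 1))"
    by (rule prod.cong) (auto simp: g_def field_simps)
  also have "\<dots> = r" using assms by (simp add: prod.delta')
  finally show ?thesis .
qed

lemma mom2:
  assumes "a < k" "b < k" "a \<noteq> b" shows "(\<Sum>x\<in>cube k. pr k r x * (x a * x b)) = r^2"
proof -
  define g where "g = (\<lambda>i t. (1 + r * t) / 2 * ((if i = a then t else (1::real)) * (if i = b then t else 1)))"
  have "pr k r x * (x a * x b) = (\<Prod>i<k. g i (x i))" for x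
    unfolding g_def pr_def prod.distrib using assms by (simp add: prod.delta')
  then have "(\<Sum>x\<in>cube k. pr k r x * (x a * x b)) = (\<Sum>x\<in>cube k. \<Prod>i<k. g i (x i))" by simp
  also have "\<dots> = (\<Prod>i<k. g i 1 + g i (-1))" by (rule sum_cube_prod)
  also have "\<dots> = (\<Prod>i<k. (if i = a then r else 1) * (if i = b then r else 1))"
    using assms(3) by (intro prod.cong) (auto simp: g_def field_simps)
  also have "\<dots> = (\<Prod>i<k. if i = a then r else 1) * (\<Prod>i<k. if i = b then r else 1)" by (rule prod.distrib)
  also have "\<dots> = r^2"
  proof -
    have "(\<Prod>i<k. if i = a then r else 1) = r" using assms(1) by (simp add: prod.delta')
    moreover have "(\<Prod>i<k. if i = b then r else 1) = r" using assms(2) by (simp add: prod.delta')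
    ultimately show ?thesis by (simp add: power2_eq_square)
  qed
  finally show ?thesis .
qed



lemma EQ_pr: "EQ k Q r = (\<Sum>x\<in>cube k. pr k r x * Q x)"
  by (simp add: EQ_def pr_def)

lemma EQ_quad:
  assumes b0: "\<And>i j. \<not> i < j \<Longrightarrow> b i j = 0"
  shows "EQ k (quadpoly k c a b) r = c + (\<Sum>i<k. a i) * r + (\<Sum>i<k. \<Sum>j<k. b i j) * r^2"
proof -
  have pt: "pr k r x * quadpoly k c a b x = c * pr k r x + (\<Sum>i<k. a i * (pr k r x * x i))
      + (\<Sum>i<k. \<Sum>j<k. b i j * (pr k r x * (x i * x j)))" for x
    unfolding quadpoly_def by (simp add: algebra_simps sum_distrib_left)
  have s1: "(\<Sum>x\<in>cube k. \<Sum>i<k. a i * (pr k r x * x i)) = (\<Sum>i<k. a i * (\<Sum>x\<in>cube k. pr k r x * x i))"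
    by (subst sum.swap) (simp add: sum_distrib_left)
  have s2: "(\<Sum>x\<in>cube k. \<Sum>i<k. \<Sum>j<k. b i j * (pr k r x * (x i * x j)))
      = (\<Sum>i<k. \<Sum>j<k. b i j * (\<Sum>x\<in>cube k. pr k r x * (x i * x j)))"
    by (simp add: sum_distrib_left sum.swap[where A="cube k"])
  have s3: "(\<Sum>i<k. a i * (\<Sum>x\<in>cube k. pr k r x * x i)) = (\<Sum>i<k. a i) * r"
    by (simp add: mom1 sum_distrib_right)
  have s4: "(\<Sum>i<k. \<Sum>j<k. b i j * (\<Sum>x\<in>cube k. pr k r x * (x i * x j))) = (\<Sum>i<k. \<Sum>j<k. b i j) * r^2"
  proof -
    have h: "b i j * (\<Sum>x\<in>cube k. pr k r x * (x i * x j)) = b i j * r^2" if "i<k" "j<k" for i j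
      using that by (cases "i<j") (simp_all add: b0 mom2)
    show ?thesis unfolding sum_distrib_right by (intro sum.cong refl) (simp add: h)
  qed
  show ?thesis
    unfolding EQ_pr pt sum.distrib s1 s2 s3 s4 by (simp add: mom0 flip: sum_distrib_left)
qed

definition Pairs :: "nat \<Rightarrow> (nat \<times> nat) set" where
  "Pairs k = {(i,j). i < j \<and> j < k}"

lemma finite_Pairs: "finite (Pairs k)"
  by (rule finite_subset[of _ "{..<k} \<times> {..<k}"]) (auto simp: Pairs_def)

lemma sum_Pairs:
  "(\<Sum>i<k. \<Sum>j<k. if i < j then g i j else 0) = (\<Sum>p\<in>Pairs k. g (fst p) (snd p))"
proof -
  have "(\<Sum>i<k. \<Sum>j<k. if i < j then g i j else 0)
      = (\<Sum>p\<in>{..<k} \<times> {..<k}. if fst p < snd p then g (fst p) (snd p) else 0)"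
    by (subst sum.cartesian_product) (simp add: case_prod_beta)
  also have "\<dots> = (\<Sum>p\<in>{p\<in>{..<k} \<times> {..<k}. fst p < snd p}. g (fst p) (snd p))"
    by (simp add: sum.inter_filter)
  also have "{p\<in>{..<k} \<times> {..<k}. fst p < snd p} = Pairs k"
    by (auto simp: Pairs_def)
  finally show ?thesis .
qed

lemma pmf_weights:
  fixes w :: "'a \<Rightarrow> real"
  assumes "finite S" "\<And>x. 0 \<le> w x" "\<And>x. x \<notin> S \<Longrightarrow> w x = 0" "sum w S = 1"
  shows "set_pmf (embed_pmf w) \<subseteq> S"
    and "measure_pmf.prob (embed_pmf w) A = (\<Sum>x\<in>S. if x \<in> A then w x else 0)"
proof -
  have int: "(\<integral>\<^sup>+x. ennreal (w x) \<partial>count_space UNIV) = 1"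
    using assms by (subst nn_integral_count_space'[of S]) (auto simp: sum_ennreal)
  have pm: "pmf (embed_pmf w) x = w x" for x
    using pmf_embed_pmf[OF assms(2) int] .
  have st: "set_pmf (embed_pmf w) = {x. w x \<noteq> 0}"
    using set_embed_pmf[OF assms(2) int] .
  show ss: "set_pmf (embed_pmf w) \<subseteq> S" using st assms(3) by auto
  have "measure_pmf.prob (embed_pmf w) A = measure_pmf.prob (embed_pmf w) (A \<inter> S)"
    using ss by (metis (no_types, lifting) Int_assoc inf.absorb_iff2 measure_Int_set_pmf)
  also have "\<dots> = sum (pmf (embed_pmf w)) (A \<inter> S)"
    using assms(1) by (simp add: measure_measure_pmf_finite)
  also have "\<dots> = (\<Sum>x\<in>S. if x \<in> A then w x else 0)"
  proof -
    have "A \<inter> S = {x\<in>S. x \<in> A}" by auto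
    then show ?thesis using assms(1) by (simp add: pm sum.inter_filter)
  qed
  finally show "measure_pmf.prob (embed_pmf w) A = (\<Sum>x\<in>S. if x \<in> A then w x else 0)" .
qed



lemma no_weights:
  assumes H: "\<not> (\<exists>\<mu>. unif_pos_corr k \<mu> \<and> set_pmf \<mu> \<subseteq> {x. P x})"
    and S_def: "S = {x\<in>cube k. P x}"
    and w0: "\<And>x. 0 \<le> w x" and wS: "\<And>x. x \<notin> S \<Longrightarrow> w x = 0" and w1: "sum w S = 1"
    and mc: "m^2 \<le> c" "c \<le> 1"
    and M1: "\<And>i. i<k \<Longrightarrow> (\<Sum>x\<in>S. w x * x i) = m"
    and M2: "\<And>i j. i<j \<Longrightarrow> j<k \<Longrightarrow> (\<Sum>x\<in>S. w x * (x i * x j)) = c"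
  shows False
proof -
  have fS: "finite S" using S_def finite_cube by auto
  define \<mu> where "\<mu> = embed_pmf w"
  have set\<mu>: "set_pmf \<mu> \<subseteq> S" unfolding \<mu>_def by (rule pmf_weights(1)[OF fS w0 wS w1])
  have meas: "measure_pmf.prob \<mu> A = (\<Sum>x\<in>S. if x \<in> A then w x else 0)" for A
    unfolding \<mu>_def by (rule pmf_weights(2)[OF fS w0 wS w1])
  define p where "p = (1 + m) / 2"
  define \<rho> where "\<rho> = (1 + 2*m + c) / 4"
  have m1: "m \<le> 1" "-1 \<le> m"
  proof -
    have "m^2 \<le> 1^2" using mc by simp
    then have "\<bar>m\<bar> \<le> 1" using abs_le_square_iff[of m 1] by simp
    then show "m \<le> 1" "-1 \<le> m" by auto
  qed
  have prob1: "measure_pmf.prob \<mu> {x. x i = 1} = p" if "i < k" for i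
  proof -
    have "measure_pmf.prob \<mu> {x. x i = 1} = (\<Sum>x\<in>S. (w x + w x * x i) / 2)"
      unfolding meas
    proof (rule sum.cong[OF refl])
      fix x assume "x \<in> S"
      then have "x i = 1 \<or> x i = -1" using cube_val[of x k i] that S_def by auto
      then show "(if x \<in> {x. x i = 1} then w x else 0) = (w x + w x * x i) / 2" by auto
    qed
    also have "\<dots> = (sum w S + (\<Sum>x\<in>S. w x * x i)) / 2"
      by (simp add: sum_divide_distrib[symmetric] sum.distrib)
    finally show ?thesis using w1 M1[OF that] by (simp add: p_def)
  qed
  have prob2: "measure_pmf.prob \<mu> {x. x i = 1 \<and> x j = 1} = \<rho>" if "i < j" "j < k" for i j
  proof -
    have "measure_pmf.prob \<mu> {x. x i = 1 \<and> x j = 1} = (\<Sum>x\<in>S. (w x + w x * x i + w x * x j + w x * (x i * x j)) / 4)"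
      unfolding meas
    proof (rule sum.cong[OF refl])
      fix x assume "x \<in> S"
      then have "x i = 1 \<or> x i = -1" "x j = 1 \<or> x j = -1" using cube_val[of x k] that S_def by auto
      then show "(if x \<in> {x. x i = 1 \<and> x j = 1} then w x else 0) = (w x + w x * x i + w x * x j + w x * (x i * x j)) / 4"
        by auto
    qed
    also have "\<dots> = (sum w S + (\<Sum>x\<in>S. w x * x i) + (\<Sum>x\<in>S. w x * x j) + (\<Sum>x\<in>S. w x * (x i * x j))) / 4"
      by (simp add: sum_divide_distrib[symmetric] sum.distrib)
    finally show ?thesis using w1 M1[of i] M1[of j] M2[OF that] that by (simp add: \<rho>_def)
  qed
  have pr: "\<rho> \<ge> p^2" using mc unfolding p_def \<rho>_def by (simp add: power2_eq_square field_simps)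
  have "p \<in> {0..1}" using m1 by (simp add: p_def)
  moreover have "\<rho> \<in> {0..1}"
  proof -
    have "0 \<le> p^2" by simp
    then have "0 \<le> \<rho>" using pr by linarith
    moreover have "\<rho> \<le> 1" using m1 mc by (simp add: \<rho>_def)
    ultimately show ?thesis by simp
  qed
  ultimately have "unif_pos_corr k \<mu>"
    unfolding unif_pos_corr_def using set\<mu> S_def pr prob1 prob2 by blast
  moreover have "set_pmf \<mu> \<subseteq> {x. P x}" using set\<mu> S_def by auto
  ultimately show False using H by blast
qed



definition M1 :: "(nat \<Rightarrow> real) set \<Rightarrow> ((nat \<Rightarrow> real) \<Rightarrow> real) \<Rightarrow> nat \<Rightarrow> real" where
  "M1 S w i = (\<Sum>x\<in>S. w x * x i)"
definition M2 :: "(nat \<Rightarrow> real) set \<Rightarrow> ((nat \<Rightarrow> real) \<Rightarrow> real) \<Rightarrow> nat \<times> nat \<Rightarrow> real" where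
  "M2 S w p = (\<Sum>x\<in>S. w x * (x (fst p) * x (snd p)))"
definition Wset :: "(nat \<Rightarrow> real) set \<Rightarrow> ((nat \<Rightarrow> real) \<Rightarrow> real) set" where
  "Wset S = {w. \<forall>x. w x \<in> (if x \<in> S then {0..1} else {0})} \<inter> {w. sum w S = 1}"
definition Dset :: "(real \<times> real) set" where
  "Dset = ({-1..1} \<times> {0..1}) \<inter> {mc. (fst mc)^2 \<le> snd mc}"
definition Fobj :: "nat \<Rightarrow> (nat \<Rightarrow> real) set \<Rightarrow> ((nat \<Rightarrow> real) \<Rightarrow> real) \<times> (real \<times> real) \<Rightarrow> real" where
  "Fobj k S z = (\<Sum>i<k. (M1 S (fst z) i - fst (snd z))^2) + (\<Sum>p\<in>Pairs k. (M2 S (fst z) p - snd (snd z))^2)"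

lemma cont_fst_coord:
  "continuous_on A (\<lambda>z::('a \<Rightarrow> real) \<times> 'b::topological_space. fst z x)"
  by (rule continuous_on_product_then_coordinatewise[OF continuous_on_fst[OF continuous_on_id]])

lemma cont_sumw: "continuous_on A (\<lambda>w::'a \<Rightarrow> real. sum w S)"
proof -
  have "continuous_on A (\<lambda>w::'a \<Rightarrow> real. \<Sum>x\<in>S. w x)"
    by (rule continuous_on_sum) (rule continuous_on_product_then_coordinatewise[OF continuous_on_id])
  then show ?thesis by simp
qed

lemma compact_box: "compact {w :: 'a \<Rightarrow> real. \<forall>x. w x \<in> B x}" if "\<And>x. compact (B x)"
proof -
  have "{w :: 'a \<Rightarrow> real. \<forall>x. w x \<in> B x} = PiE UNIV B" by (auto simp: PiE_def Pi_def)
  moreover have "compactin (product_topology (\<lambda>_. euclidean) UNIV) (PiE UNIV B)"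
    using that by (simp add: compactin_PiE)
  ultimately show ?thesis by (simp add: euclidean_product_topology)
qed

lemma compact_Wset: "compact (Wset S)"
  unfolding Wset_def
proof (rule compact_Int_closed)
  show "compact {w. \<forall>x. w x \<in> (if x \<in> S then {0..1} else {0::real})}"
    by (rule compact_box) auto
  show "closed {w :: (nat \<Rightarrow> real) \<Rightarrow> real. sum w S = 1}"
    by (rule closed_Collect_eq) (simp_all add: cont_sumw)
qed

lemma compact_Dset: "compact Dset"
  unfolding Dset_def
  by (intro compact_Int_closed compact_Times compact_Icc closed_Collect_le; intro continuous_intros)

lemma cont_Fobj: "continuous_on UNIV (Fobj k S)"
  unfolding Fobj_def M1_def M2_def
  by (intro continuous_intros cont_fst_coord)



lemma quad_G:
  fixes G H :: real
  assumes h: "\<And>t. 0 < t \<Longrightarrow> t \<le> 1 \<Longrightarrow> 0 \<le> 2*t*G + t^2*H" and H: "0 \<le> H"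
  shows "0 \<le> G"
proof (rule ccontr)
  assume "\<not> 0 \<le> G" then have G: "G < 0" by simp
  define t where "t = min 1 (-G/(H+1))"
  have "0 < -G/(H+1)" using G H by (intro divide_pos_pos) auto
  then have t0: "0 < t" by (simp add: t_def)
  have t1: "t \<le> 1" by (simp add: t_def)
  have "t \<le> -G/(H+1)" by (simp add: t_def)
  then have "t * H \<le> (-G/(H+1)) * H" using H by (rule mult_right_mono)
  also have "\<dots> = -G * (H/(H+1))" by simp
  also have "\<dots> < -G * 1"
  proof (rule mult_strict_left_mono)
    show "H/(H+1) < 1" using H by simp
  qed (use G in simp)
  finally have "2*G + t*H < 0" using G by linarith
  then have "t * (2*G + t*H) < 0" using t0 by (simp add: mult_pos_neg)
  moreover have "0 \<le> 2*t*G + t^2*H" using h[OF t0 t1] .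
  ultimately show False by (simp add: algebra_simps power2_eq_square)
qed

lemma sq_comb: "((1-t)*a + t*b)^2 = a^2 + 2*t*(a*(b-a)) + t^2*(b-a)^2" for a b t :: real
  by (simp add: power2_eq_square algebra_simps)

lemma var_aux:
  fixes u e :: "'a \<Rightarrow> real" and v f :: "'b \<Rightarrow> real"
  assumes "\<And>t. 0<t \<Longrightarrow> t\<le>1 \<Longrightarrow> (\<Sum>i\<in>I. (u i)^2) + (\<Sum>j\<in>J. (v j)^2)
      \<le> (\<Sum>i\<in>I. ((1-t)*u i + t*e i)^2) + (\<Sum>j\<in>J. ((1-t)* v j + t*f j)^2)"
  shows "0 \<le> (\<Sum>i\<in>I. u i * (e i - u i)) + (\<Sum>j\<in>J. v j * (f j - v j))"
proof (rule quad_G)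
  fix t :: real assume t: "0 < t" "t \<le> 1"
  have "(\<Sum>i\<in>I. ((1-t)*u i + t*e i)^2) + (\<Sum>j\<in>J. ((1-t)* v j + t*f j)^2)
      = (\<Sum>i\<in>I. (u i)^2) + (\<Sum>j\<in>J. (v j)^2)
        + 2*t*((\<Sum>i\<in>I. u i * (e i - u i)) + (\<Sum>j\<in>J. v j * (f j - v j)))
        + t^2*((\<Sum>i\<in>I. (e i - u i)^2) + (\<Sum>j\<in>J. (f j - v j)^2))"
    unfolding sq_comb sum.distrib by (simp add: sum_distrib_left algebra_simps)
  then show "0 \<le> 2*t*((\<Sum>i\<in>I. u i * (e i - u i)) + (\<Sum>j\<in>J. v j * (f j - v j)))
        + t^2*((\<Sum>i\<in>I. (e i - u i)^2) + (\<Sum>j\<in>J. (f j - v j)^2))"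
    using assms[OF t] by linarith
next
  show "0 \<le> (\<Sum>i\<in>I. (e i - u i)^2) + (\<Sum>j\<in>J. (f j - v j)^2)"
    by (intro add_nonneg_nonneg sum_nonneg) auto
qed

lemma M1_comb: "M1 S (\<lambda>x. (1-t)*w1 x + t*w2 x) i = (1-t)*M1 S w1 i + t*M1 S w2 i"
  by (simp add: M1_def distrib_right sum.distrib sum_distrib_left mult.assoc)
lemma M2_comb: "M2 S (\<lambda>x. (1-t)*w1 x + t*w2 x) p = (1-t)*M2 S w1 p + t*M2 S w2 p"
  by (simp add: M2_def distrib_right sum.distrib sum_distrib_left mult.assoc)

lemma sq_convex: "((1-t)*a + t*b)^2 \<le> (1-t)*a^2 + t*b^2" if "0 \<le> t" "t \<le> 1" for a b t :: real
proof -
  have "(1-t)*a^2 + t*b^2 - ((1-t)*a + t*b)^2 = t*(1-t)*(a-b)^2"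
    by (simp add: power2_eq_square algebra_simps)
  moreover have "0 \<le> t*(1-t)*(a-b)^2" using that by simp
  ultimately show ?thesis by linarith
qed

lemma comb_in_K:
  assumes "w1 \<in> Wset S" "w2 \<in> Wset S" "(m1,c1) \<in> Dset" "(m2,c2) \<in> Dset" "0 \<le> t" "t \<le> 1"
  shows "(\<lambda>x. (1-t)*w1 x + t*w2 x) \<in> Wset S" "((1-t)*m1 + t*m2, (1-t)*c1 + t*c2) \<in> Dset"
proof -
  have cb: "(1-t)*a + t*b \<in> {lo..hi}" if "a \<in> {lo..hi}" "b \<in> {lo..hi}" for a b lo hi :: real
  proof -
    have "(1-t)*lo + t*lo \<le> (1-t)*a + t*b" using that assms(5,6)
      by (intro add_mono mult_left_mono) auto
    moreover have "(1-t)*a + t*b \<le> (1-t)*hi + t*hi" using that assms(5,6)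
      by (intro add_mono mult_left_mono) auto
    ultimately show ?thesis by (simp add: algebra_simps)
  qed
  show "(\<lambda>x. (1-t)*w1 x + t*w2 x) \<in> Wset S"
    unfolding Wset_def
  proof (intro IntI CollectI allI)
    fix x show "(1-t)*w1 x + t*w2 x \<in> (if x \<in> S then {0..1} else {0})"
    proof (cases "x \<in> S")
      case True
      have a1: "\<forall>y. w1 y \<in> (if y\<in>S then {0..1} else {0})" "\<forall>y. w2 y \<in> (if y\<in>S then {0..1} else {0})"
        using assms(1,2) unfolding Wset_def by blast+
      then have "w1 x \<in> {0..1}" "w2 x \<in> {0..1}" using spec[OF a1(1), of x] spec[OF a1(2), of x] True by simp_all
      then show ?thesis using cb True by simp
    next
      case False
      have a1: "\<forall>y. w1 y \<in> (if y\<in>S then {0..1} else {0})" "\<forall>y. w2 y \<in> (if y\<in>S then {0..1} else {0})"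
        using assms(1,2) unfolding Wset_def by blast+
      then have "w1 x = 0" "w2 x = 0" using spec[OF a1(1), of x] spec[OF a1(2), of x] False by simp_all
      then show ?thesis using False by simp
    qed
  next
    have "sum w1 S = 1" "sum w2 S = 1" using assms(1,2) by (auto simp: Wset_def)
    then show "(\<Sum>x\<in>S. (1-t)*w1 x + t*w2 x) = 1"
      by (simp add: sum.distrib flip: sum_distrib_left)
  qed
  have d: "m1 \<in> {-1..1}" "c1 \<in> {0..1}" "m1^2 \<le> c1" "m2 \<in> {-1..1}" "c2 \<in> {0..1}" "m2^2 \<le> c2"
    using assms(3,4) by (auto simp: Dset_def)
  have "((1-t)*m1 + t*m2)^2 \<le> (1-t)*m1^2 + t*m2^2" using sq_convex assms(5,6) by blast
  also have "\<dots> \<le> (1-t)*c1 + t*c2" using d assms(5,6) by (intro add_mono mult_left_mono) auto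
  finally show "((1-t)*m1 + t*m2, (1-t)*c1 + t*c2) \<in> Dset"
    using cb[OF d(1) d(4)] cb[OF d(2) d(5)] by (simp add: Dset_def)
qed



lemma separation:
  assumes fS: "finite S" and ne: "S \<noteq> {}"
    and noW: "\<And>w m c. w \<in> Wset S \<Longrightarrow> (m,c) \<in> Dset \<Longrightarrow> (\<forall>i<k. M1 S w i = m) \<Longrightarrow> (\<forall>p\<in>Pairs k. M2 S w p = c) \<Longrightarrow> False"
  shows "\<exists>u vv T F. 0 < F \<and>
     (\<forall>x\<in>S. T + F \<le> (\<Sum>i<k. u i * x i) + (\<Sum>p\<in>Pairs k. vv p * (x (fst p) * x (snd p)))) \<and>
     (\<forall>m c. (m,c) \<in> Dset \<longrightarrow> (\<Sum>i<k. u i) * m + (\<Sum>p\<in>Pairs k. vv p) * c \<le> T)"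
proof -
  define K where "K = Wset S \<times> Dset"
  obtain x0 where x0: "x0 \<in> S" using ne by blast
  define \<delta> where "\<delta> = (\<lambda>y. if y = x0 then 1 else (0::real))"
  have \<delta>W: "\<delta> \<in> Wset S" using x0 fS by (auto simp: Wset_def \<delta>_def sum.delta')
  have D0: "(0,0) \<in> Dset" by (simp add: Dset_def)
  have "K \<noteq> {}" using \<delta>W D0 by (auto simp: K_def)
  moreover have "compact K" unfolding K_def by (intro compact_Times compact_Wset compact_Dset)
  ultimately obtain z where zK: "z \<in> K" and zmin: "\<And>y. y \<in> K \<Longrightarrow> Fobj k S z \<le> Fobj k S y"
    using continuous_attains_inf[of K "Fobj k S"] continuous_on_subset[OF cont_Fobj] by blast
  obtain ws ms cs where z: "z = (ws, (ms, cs))" by (cases z) auto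
  have wsW: "ws \<in> Wset S" and msD: "(ms,cs) \<in> Dset" using zK z by (auto simp: K_def)
  define u where "u i = M1 S ws i - ms" for i
  define vv where "vv p = M2 S ws p - cs" for p
  define F where "F = (\<Sum>i<k. (u i)^2) + (\<Sum>p\<in>Pairs k. (vv p)^2)"
  have Fz: "Fobj k S z = F" by (simp add: Fobj_def z F_def u_def vv_def)
  have Fpos: "0 < F"
  proof (rule ccontr)
    assume "\<not> 0 < F"
    moreover have a: "0 \<le> (\<Sum>i<k. (u i)^2)" "0 \<le> (\<Sum>p\<in>Pairs k. (vv p)^2)" by (auto intro: sum_nonneg)
    ultimately have "(\<Sum>i<k. (u i)^2) = 0" "(\<Sum>p\<in>Pairs k. (vv p)^2) = 0" unfolding F_def by linarith+
    then have "\<forall>i<k. u i = 0" "\<forall>p\<in>Pairs k. vv p = 0"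
      by (simp_all add: sum_nonneg_eq_0_iff finite_Pairs)
    then show False using noW[OF wsW msD] by (simp add: u_def vv_def)
  qed
  define T where "T = (\<Sum>i<k. u i) * ms + (\<Sum>p\<in>Pairs k. vv p) * cs"
  have key: "0 \<le> (\<Sum>i<k. u i * ((M1 S w i - m) - u i)) + (\<Sum>p\<in>Pairs k. vv p * ((M2 S w p - c) - vv p))"
    if wW: "w \<in> Wset S" and mcD: "(m,c) \<in> Dset" for w m c
  proof (rule var_aux)
    fix t :: real assume t: "0 < t" "t \<le> 1"
    define zt where "zt = ((\<lambda>x. (1-t)*ws x + t*w x), ((1-t)*ms + t*m, (1-t)*cs + t*c))"
    have "zt \<in> K" unfolding zt_def K_def using comb_in_K[OF wsW wW msD mcD] t by auto
    then have "Fobj k S z \<le> Fobj k S zt" by (rule zmin)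
    moreover have "Fobj k S zt = (\<Sum>i<k. ((1-t)*u i + t*(M1 S w i - m))^2) + (\<Sum>p\<in>Pairs k. ((1-t)* vv p + t*(M2 S w p - c))^2)"
      unfolding Fobj_def zt_def fst_conv snd_conv M1_comb M2_comb by (simp add: u_def vv_def algebra_simps)
    ultimately show "(\<Sum>i<k. (u i)^2) + (\<Sum>p\<in>Pairs k. (vv p)^2) \<le> (\<Sum>i<k. ((1-t)*u i + t*(M1 S w i - m))^2) + (\<Sum>p\<in>Pairs k. ((1-t)* vv p + t*(M2 S w p - c))^2)"
      using Fz F_def by simp
  qed
  have partA: "T + F \<le> (\<Sum>i<k. u i * x i) + (\<Sum>p\<in>Pairs k. vv p * (x (fst p) * x (snd p)))" if xS: "x \<in> S" for x
  proof -
    define dx where "dx = (\<lambda>y. if y = x then 1 else (0::real))"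
    have dxW: "dx \<in> Wset S" using xS fS by (auto simp: Wset_def dx_def sum.delta')
    have m1: "M1 S dx i = x i" for i
    proof -
      have "M1 S dx i = (\<Sum>y\<in>S. if y = x then x i else 0)" unfolding M1_def by (rule sum.cong) (auto simp: dx_def)
      then show ?thesis using xS fS by (simp add: sum.delta')
    qed
    have m2: "M2 S dx p = x (fst p) * x (snd p)" for p
    proof -
      have "M2 S dx p = (\<Sum>y\<in>S. if y = x then x (fst p) * x (snd p) else 0)" unfolding M2_def by (rule sum.cong) (auto simp: dx_def)
      then show ?thesis using xS fS by (simp add: sum.delta')
    qed
    have "0 \<le> (\<Sum>i<k. u i * ((x i - ms) - u i)) + (\<Sum>p\<in>Pairs k. vv p * ((x (fst p) * x (snd p) - cs) - vv p))"
      using key[OF dxW msD] by (simp add: m1 m2)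
    also have "\<dots> = (\<Sum>i<k. u i * x i) + (\<Sum>p\<in>Pairs k. vv p * (x (fst p) * x (snd p))) - T - F"
      unfolding T_def F_def
      by (simp add: algebra_simps sum_subtractf sum_distrib_right sum_distrib_left power2_eq_square sum.distrib)
    finally show ?thesis by linarith
  qed
  have partB: "(\<Sum>i<k. u i) * m + (\<Sum>p\<in>Pairs k. vv p) * c \<le> T" if mcD: "(m,c) \<in> Dset" for m c
  proof -
    have "0 \<le> (\<Sum>i<k. u i * ((M1 S ws i - m) - u i)) + (\<Sum>p\<in>Pairs k. vv p * ((M2 S ws p - c) - vv p))"
      using key[OF wsW mcD] .
    also have "\<dots> = (\<Sum>i<k. u i * (ms - m)) + (\<Sum>p\<in>Pairs k. vv p * (cs - c))"
      by (simp add: u_def vv_def)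
    also have "\<dots> = T - ((\<Sum>i<k. u i) * m + (\<Sum>p\<in>Pairs k. vv p) * c)"
      unfolding T_def by (simp add: algebra_simps sum_distrib_right sum_distrib_left sum_subtractf)
    finally show ?thesis by linarith
  qed
  show ?thesis using Fpos partA partB by blast
qed



lemma M1_delta: "finite S \<Longrightarrow> x \<in> S \<Longrightarrow> M1 S (\<lambda>y. if y = x then 1 else 0) i = x i"
proof -
  assume a: "finite S" "x \<in> S"
  have "M1 S (\<lambda>y. if y = x then 1 else 0) i = (\<Sum>y\<in>S. if y = x then x i else 0)"
    unfolding M1_def by (rule sum.cong) auto
  then show ?thesis using a by (simp add: sum.delta')
qed

lemma Q_shape:
  fixes u :: "nat \<Rightarrow> real" and vv :: "nat \<times> nat \<Rightarrow> real" and s :: real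
  defines "b \<equiv> (\<lambda>i j. if i < j then vv (i,j) - s else 0)"
  shows "quadpoly k 0 u b x = (\<Sum>i<k. u i * x i) + (\<Sum>p\<in>Pairs k. vv p * (x (fst p) * x (snd p)))
            - s * (\<Sum>p\<in>Pairs k. x (fst p) * x (snd p))"
    and "EQ k (quadpoly k 0 u b) r = (\<Sum>i<k. u i) * r + ((\<Sum>p\<in>Pairs k. vv p) - s * real (card (Pairs k))) * r^2"
proof -
  have "(\<Sum>i<k. \<Sum>j<k. b i j * x i * x j) = (\<Sum>i<k. \<Sum>j<k. if i < j then (vv (i,j) - s) * (x i * x j) else 0)"
    unfolding b_def by (intro sum.cong refl) auto
  also have "\<dots> = (\<Sum>p\<in>Pairs k. (vv p - s) * (x (fst p) * x (snd p)))"
    by (subst sum_Pairs) simp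
  finally show "quadpoly k 0 u b x = (\<Sum>i<k. u i * x i) + (\<Sum>p\<in>Pairs k. vv p * (x (fst p) * x (snd p)))
            - s * (\<Sum>p\<in>Pairs k. x (fst p) * x (snd p))"
    unfolding quadpoly_def by (simp add: algebra_simps sum_subtractf sum_distrib_left)
  have "(\<Sum>i<k. \<Sum>j<k. b i j) = (\<Sum>i<k. \<Sum>j<k. if i < j then vv (i,j) - s else 0)"
    unfolding b_def by simp
  also have "\<dots> = (\<Sum>p\<in>Pairs k. vv p - s)"
    by (subst sum_Pairs) simp
  also have "\<dots> = (\<Sum>p\<in>Pairs k. vv p) - s * real (card (Pairs k))"
    by (simp add: sum_subtractf)
  finally show "EQ k (quadpoly k 0 u b) r = (\<Sum>i<k. u i) * r + ((\<Sum>p\<in>Pairs k. vv p) - s * real (card (Pairs k))) * r^2"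
    by (subst EQ_quad) (auto simp: b_def)
qed

lemma pairs_bound:
  assumes "x \<in> cube k"
  shows "(\<Sum>p\<in>Pairs k. x (fst p) * x (snd p)) \<le> real (card (Pairs k))"
proof -
  have "(\<Sum>p\<in>Pairs k. x (fst p) * x (snd p)) \<le> (\<Sum>p\<in>Pairs k. 1)"
  proof (rule sum_mono)
    fix p assume "p \<in> Pairs k"
    then have "fst p < k" "snd p < k" by (auto simp: Pairs_def)
    then have "x (fst p) = 1 \<or> x (fst p) = -1" "x (snd p) = 1 \<or> x (snd p) = -1"
      using cube_val[OF assms] by auto
    then show "x (fst p) * x (snd p) \<le> 1" by auto
  qed
  then show ?thesis by simp
qed



lemma finish:
  assumes r0: "\<bar>r0\<bar> < 1" and mx: "\<And>r. EQ k Q r \<le> EQ k Q r0"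
    and sep: "\<And>x. x \<in> cube k \<Longrightarrow> P x \<Longrightarrow> EQ k Q r0 < Q x"
  shows "(\<forall>x\<in>cube k. P x \<longrightarrow> Q x > EQplus k Q) \<and> (\<exists>r. \<bar>r\<bar> < 1 \<and> EQ k Q r = EQplus k Q)"
proof -
  have "EQplus k Q = EQ k Q r0"
    unfolding EQplus_def
    by (rule cSup_eq_maximum) (use r0 mx in \<open>auto simp: abs_less_iff\<close>)
  then show ?thesis using sep r0 by auto
qed

lemma no_weights':
  assumes H: "\<not> (\<exists>\<mu>. unif_pos_corr k \<mu> \<and> set_pmf \<mu> \<subseteq> {x. P x})"
    and S_def: "S = {x\<in>cube k. P x}"
    and wW: "w \<in> Wset S" and mcD: "(m,c) \<in> Dset"
    and M1: "\<forall>i<k. M1 S w i = m" and M2: "\<forall>p\<in>Pairs k. M2 S w p = c"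
  shows False
proof (rule no_weights[OF H S_def])
  have a1: "\<forall>y. w y \<in> (if y\<in>S then {0..1} else {0})" using wW unfolding Wset_def by blast
  show "0 \<le> w x" for x using spec[OF a1, of x] by (auto split: if_splits)
  show "x \<notin> S \<Longrightarrow> w x = 0" for x using spec[OF a1, of x] by auto
  show "sum w S = 1" using wW by (simp add: Wset_def)
  show "m^2 \<le> c" "c \<le> 1" using mcD by (auto simp: Dset_def)
  show "(\<Sum>x\<in>S. w x * x i) = m" if "i < k" for i using M1 that by (simp add: M1_def)
  show "(\<Sum>x\<in>S. w x * (x i * x j)) = c" if "i < j" "j < k" for i j
    using M2 that by (auto simp: M2_def Pairs_def)
qed

theorem theorem6p4:
  fixes k :: nat and P :: "(nat \<Rightarrow> real) \<Rightarrow> bool"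
  assumes "\<not> (\<exists>\<mu>. unif_pos_corr k \<mu> \<and> set_pmf \<mu> \<subseteq> {x. P x})"
  shows "\<exists>c a b. (\<forall>x\<in>cube k. P x \<longrightarrow> quadpoly k c a b x > EQplus k (quadpoly k c a b)) \<and>
           (\<exists>r. \<bar>r\<bar> < 1 \<and> EQ k (quadpoly k c a b) r = EQplus k (quadpoly k c a b))"
proof -
  define S where "S = {x\<in>cube k. P x}"
  have fS: "finite S" using finite_cube by (simp add: S_def)
  show ?thesis
  proof (cases "S = {}")
    case True
    define Q where "Q = quadpoly k 0 (\<lambda>_. 0) (\<lambda>_ _. 0)"
    have "EQ k Q r = 0" for r by (simp add: EQ_def Q_def quadpoly_def)
    then have "(\<forall>x\<in>cube k. P x \<longrightarrow> Q x > EQplus k Q) \<and> (\<exists>r. \<bar>r\<bar> < 1 \<and> EQ k Q r = EQplus k Q)"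
      by (intro finish[of 0]) (use True S_def in auto)
    then show ?thesis unfolding Q_def by blast
  next
    case False
    note noW = no_weights'[OF assms S_def]
    obtain x0 where x0: "x0 \<in> S" using False by blast
    define \<delta> where "\<delta> = (\<lambda>y. if y = x0 then 1 else (0::real))"
    have \<delta>W: "\<delta> \<in> Wset S" using x0 fS by (auto simp: Wset_def \<delta>_def sum.delta')
    have x0c: "x0 \<in> cube k" using x0 S_def by auto
    have k2: "2 \<le> k"
    proof (rule ccontr)
      assume "\<not> 2 \<le> k"
      then have k1: "k \<le> 1" by simp
      define m where "m = (if k = 0 then 0 else x0 0)"
      have "m = 1 \<or> m = -1 \<or> m = 0" using cube_val[OF x0c, of 0] by (auto simp: m_def)
      then have "(m,1) \<in> Dset" by (auto simp: Dset_def)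
      moreover have "\<forall>i<k. M1 S \<delta> i = m"
      proof (intro allI impI)
        fix i assume "i < k"
        then have "i = 0" "k \<noteq> 0" using k1 by auto
        then show "M1 S \<delta> i = m" using M1_delta[OF fS x0, of i] by (simp add: m_def \<delta>_def)
      qed
      moreover have "\<forall>p\<in>Pairs k. M2 S \<delta> p = 1" using k1 by (auto simp: Pairs_def)
      ultimately show False using noW[OF \<delta>W] by blast
    qed
    obtain u vv T F where Fpos: "0 < F"
      and partA: "\<forall>x\<in>S. T + F \<le> (\<Sum>i<k. u i * x i) + (\<Sum>p\<in>Pairs k. vv p * (x (fst p) * x (snd p)))"
      and partB: "\<forall>m c. (m,c) \<in> Dset \<longrightarrow> (\<Sum>i<k. u i) * m + (\<Sum>p\<in>Pairs k. vv p) * c \<le> T"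
    proof -
      have "\<exists>u vv T F. 0 < F \<and>
       (\<forall>x\<in>S. T + F \<le> (\<Sum>i<k. u i * x i) + (\<Sum>p\<in>Pairs k. vv p * (x (fst p) * x (snd p)))) \<and>
       (\<forall>m c. (m,c) \<in> Dset \<longrightarrow> (\<Sum>i<k. u i) * m + (\<Sum>p\<in>Pairs k. vv p) * c \<le> T)"
        by (rule separation[OF fS False]) (erule noW; assumption)
      then show thesis by (elim exE conjE) (rule that; assumption)
    qed
    define U where "U = (\<Sum>i<k. u i)"
    define V where "V = (\<Sum>p\<in>Pairs k. vv p)"
    define N where "N = real (card (Pairs k))"
    have "(0,1) \<in> Pairs k" using k2 by (auto simp: Pairs_def)
    then have "card (Pairs k) \<noteq> 0" using finite_Pairs by (metis card_0_eq empty_iff)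
    then have N1: "1 \<le> N" by (simp add: N_def)
    have bU: "\<bar>U\<bar> + V \<le> T"
    proof -
      have "((if U \<ge> 0 then 1 else -1), 1) \<in> Dset" by (auto simp: Dset_def)
      then have h: "U * (if U \<ge> 0 then 1 else -1) + V * 1 \<le> T" using partB unfolding U_def V_def by blast
      show ?thesis
      proof (cases "0 \<le> U")
        case True with h show ?thesis by simp
      next
        case False with h show ?thesis by simp
      qed
    qed
    have D_r: "U * r + V * r^2 \<le> T" if "\<bar>r\<bar> \<le> 1" for r
    proof -
      have "r^2 \<le> 1" using that by (simp add: abs_square_le_1)
      then have "(r, r^2) \<in> Dset" using that by (auto simp: Dset_def)
      then show ?thesis using partB by (simp add: U_def V_def)
    qed
    define b where "b s = (\<lambda>i j. if i < j then vv (i,j) - s else (0::real))" for s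
    have Qx: "quadpoly k 0 u (b s) x \<ge> T + F - s * N" if "x \<in> S" "0 \<le> s" for x s
    proof -
      have xc: "x \<in> cube k" using that S_def by auto
      have "s * (\<Sum>p\<in>Pairs k. x (fst p) * x (snd p)) \<le> s * N"
        using pairs_bound[OF xc] that(2) by (simp add: N_def mult_left_mono)
      then show ?thesis
        using partA that(1) unfolding b_def Q_shape(1) by force
    qed
    have EQs: "EQ k (quadpoly k 0 u (b s)) r = U * r + (V - s * N) * r^2" for s r
      unfolding b_def Q_shape(2) U_def V_def N_def ..
    show ?thesis
    proof (cases "2*V + \<bar>U\<bar> < 0")
      case True
      define r0 where "r0 = -U/(2*V)"
      have V0: "V < 0" using True by linarith
      have Ur: "U = -2*V*r0" using V0 by (simp add: r0_def)
      have r0a: "\<bar>r0\<bar> < 1"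
      proof -
        have "\<bar>r0\<bar> = \<bar>U\<bar> / (-2*V)" using V0 by (simp add: r0_def abs_divide)
        also have "\<dots> < 1" by (rule pos_divide_less_eq[THEN iffD2]) (use True V0 in auto)
        finally show ?thesis .
      qed
      have mx: "EQ k (quadpoly k 0 u (b 0)) r \<le> EQ k (quadpoly k 0 u (b 0)) r0" for r
      proof -
        have "U * r0 + V * r0^2 - (U * r + V * r^2) = -V * (r - r0)^2"
          unfolding Ur by (simp add: power2_eq_square algebra_simps)
        moreover have "0 \<le> -V * (r - r0)^2" using V0 by (intro mult_nonneg_nonneg) auto
        ultimately show ?thesis unfolding EQs by simp
      qed
      have "(\<forall>x\<in>cube k. P x \<longrightarrow> quadpoly k 0 u (b 0) x > EQplus k (quadpoly k 0 u (b 0))) \<and>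
           (\<exists>r. \<bar>r\<bar> < 1 \<and> EQ k (quadpoly k 0 u (b 0)) r = EQplus k (quadpoly k 0 u (b 0)))"
      proof (rule finish[OF r0a mx])
        fix x assume "x \<in> cube k" "P x"
        then have xS: "x \<in> S" by (simp add: S_def)
        have "EQ k (quadpoly k 0 u (b 0)) r0 \<le> T" unfolding EQs using D_r r0a by simp
        also have "\<dots> < T + F" using Fpos by simp
        also have "\<dots> \<le> quadpoly k 0 u (b 0) x" using Qx[OF xS, of 0] by simp
        finally show "EQ k (quadpoly k 0 u (b 0)) r0 < quadpoly k 0 u (b 0) x" .
      qed
      then show ?thesis by blast
    next
      case False
      define \<eta> where "\<eta> = F/2"
      define y where "y = \<bar>U\<bar>/2 + \<eta>"
      define \<sigma> where "\<sigma> = y + V"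
      define s where "s = \<sigma> / N"
      have \<eta>0: "0 < \<eta>" using Fpos by (simp add: \<eta>_def)
      have y0: "0 < y" using \<eta>0 by (simp add: y_def)
      have \<sigma>0: "0 < \<sigma>" using False \<eta>0 by (simp add: \<sigma>_def y_def)
      have s0: "0 \<le> s" using \<sigma>0 N1 by (simp add: s_def)
      have sN: "s * N = \<sigma>" using N1 by (simp add: s_def)
      define r0 where "r0 = U/(2*y)"
      have Ur: "U = 2*y*r0" using y0 by (simp add: r0_def)
      have r0a: "\<bar>r0\<bar> < 1"
        using y0 \<eta>0 by (simp add: r0_def abs_divide divide_less_eq y_def)
      have Vs: "V - s * N = -y" by (simp add: sN \<sigma>_def)
      have mx: "EQ k (quadpoly k 0 u (b s)) r \<le> EQ k (quadpoly k 0 u (b s)) r0" for r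
      proof -
        have "U * r0 - y * r0^2 - (U * r - y * r^2) = y * (r - r0)^2"
          unfolding Ur by (simp add: power2_eq_square algebra_simps)
        moreover have "0 \<le> y * (r - r0)^2" using y0 by simp
        ultimately show ?thesis unfolding EQs Vs by simp
      qed
      have "(\<forall>x\<in>cube k. P x \<longrightarrow> quadpoly k 0 u (b s) x > EQplus k (quadpoly k 0 u (b s))) \<and>
           (\<exists>r. \<bar>r\<bar> < 1 \<and> EQ k (quadpoly k 0 u (b s)) r = EQplus k (quadpoly k 0 u (b s)))"
      proof (rule finish[OF r0a mx])
        fix x assume "x \<in> cube k" "P x"
        then have xS: "x \<in> S" by (simp add: S_def)
        have "EQ k (quadpoly k 0 u (b s)) r0 = y * r0^2"
          unfolding EQs Vs Ur by (simp add: power2_eq_square algebra_simps)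
        also have "\<dots> < y * 1"
        proof (rule mult_strict_left_mono)
          show "r0^2 < 1" using r0a by (simp add: abs_square_less_1)
        qed (use y0 in simp)
        also have "\<dots> \<le> T + F - \<sigma>" using bU by (simp add: \<sigma>_def y_def \<eta>_def)
        also have "\<dots> \<le> quadpoly k 0 u (b s) x" using Qx[OF xS s0] sN by simp
        finally show "EQ k (quadpoly k 0 u (b s)) r0 < quadpoly k 0 u (b s) x" .
      qed
      then show ?thesis by blast
    qed
  qed
qed

end
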